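(* Let $b$ be an angular kernel on $S^{d-1}$ and $c_K,C_P>0$. Assume that for every smooth $f:S^{d-1}\to(0,\infty)$ with $f(\sigma)=f(-\sigma)$, \[\int_{S^{d-1}}\Gamma^2_{\mathcal B,\Delta}(\log f,\log f)f\,d\sigma\ge c_K\int_{S^{d-1}}\frac{|\nabla f|^2}{f}d\sigma\quad\text{and}\quad C_P\int_{S^{d-1}}|\nabla f|^2d\sigma\ge\iint_{S^{d-1}\times S^{d-1}}(f(\sigma')-f(\sigma))^2b(\sigma'\cdot\sigma)d\sigma'd\sigma.\] Then for every such $f$, \[\int_{S^{d-1}}\Gamma^2_{\mathcal B,\Delta}(\log f,\log f)f\,d\sigma\ge\frac{2c_K}{C_P}\iint_{S^{d-1}\times S^{d-1}}\frac{(f(\sigma')-f(\sigma))^2}{f(\sigma')+f(\sigma)}b(\sigma'\cdot\sigma)d\sigma'd\sigma,\] i.e. $\Lambda_b\ge 2c_K/C_P$.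
   Context: An angular kernel is $b:[-1,1]\to[0,\infty)$ with $\int(1-(e\cdot\sigma)^2)b(e\cdot\sigma)d\sigma<\infty$. $\mathcal Bg(\sigma)=\int_{S^{d-1}}(g(\sigma')-g(\sigma))b(\sigma'\cdot\sigma)d\sigma'$; $\Gamma_\Delta(g,h)=\nabla g\cdot\nabla h$ (spherical gradient); $\Gamma^2_{\mathcal B,\Delta}(g,h)=\frac12(\mathcal B\Gamma_\Delta(g,h)-\Gamma_\Delta(\mathcal Bg,h)-\Gamma_\Delta(g,\mathcal Bh))$. $\Lambda_b$ is the largest constant for which the displayed conclusion holds for all even positive smooth $f$. *)

theory Defs
  imports "HOL-Analysis.Analysis"
begin

text \<open>The unit sphere S^{d-1} in a Euclidean space 'a of dimension d = DIM('a).\<close>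
abbreviation Sph :: "'a::euclidean_space set" where
  "Sph \<equiv> sphere 0 1"

definition hext :: "('a::euclidean_space \<Rightarrow> real) \<Rightarrow> 'a \<Rightarrow> real" where
  "hext g x = g (x /\<^sub>R norm x)"

fun dirderiv :: "'a::euclidean_space list \<Rightarrow> ('a \<Rightarrow> real) \<Rightarrow> 'a \<Rightarrow> real" where
  "dirderiv [] F = F"
| "dirderiv (v # vs) F = (\<lambda>x. frechet_derivative (dirderiv vs F) (at x) v)"

definition smooth_on :: "'a::euclidean_space set \<Rightarrow> ('a \<Rightarrow> real) \<Rightarrow> bool" where
  "smooth_on U F \<longleftrightarrow> (\<forall>vs. set vs \<subseteq> Basis \<longrightarrow>
      dirderiv vs F differentiable_on U \<and> continuous_on U (dirderiv vs F))"

definition smooth_sphere :: "('a::euclidean_space \<Rightarrow> real) \<Rightarrow> bool" where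
  "smooth_sphere g \<longleftrightarrow> smooth_on (- {0}) (hext g)"

definition grad :: "('a::euclidean_space \<Rightarrow> real) \<Rightarrow> 'a \<Rightarrow> 'a" where
  "grad F x = (\<Sum>i\<in>Basis. frechet_derivative F (at x) i *\<^sub>R i)"

text \<open>Spherical gradient: gradient of the degree-0 homogeneous extension
  (equals the tangential projection of the gradient of any smooth extension).\<close>
definition sgrad :: "('a::euclidean_space \<Rightarrow> real) \<Rightarrow> 'a \<Rightarrow> 'a" where
  "sgrad g x = grad (hext g) x"

text \<open>Surface measure integral over S^{d-1}, via the cone construction:
  int_{S} g dsigma = d * int_{B(0,1)} g(x/|x|) dx.\<close>
definition sph_int :: "('a::euclidean_space \<Rightarrow> real) \<Rightarrow> real" where
  "sph_int g = real DIM('a) * (LINT x : ball 0 1 | lborel. g (x /\<^sub>R norm x))"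

definition sph_int_on :: "'a::euclidean_space set \<Rightarrow> ('a \<Rightarrow> real) \<Rightarrow> real" where
  "sph_int_on A g = sph_int (\<lambda>s. indicator A s * g s)"

definition sph_integrable :: "('a::euclidean_space \<Rightarrow> real) \<Rightarrow> bool" where
  "sph_integrable g \<longleftrightarrow> set_integrable lborel (ball 0 1) (\<lambda>x. g (x /\<^sub>R norm x))"

definition angular_kernel :: "(real \<Rightarrow> real) \<Rightarrow> 'a::euclidean_space itself \<Rightarrow> bool" where
  "angular_kernel b _ \<longleftrightarrow> (\<forall>t\<in>{-1..1}. 0 \<le> b t) \<and> b \<in> borel_measurable borel \<and>
     (\<forall>e::'a. e \<in> Sph \<longrightarrow> sph_integrable (\<lambda>s. (1 - (e \<bullet> s)\<^sup>2) * b (e \<bullet> s)))"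

text \<open>Collision-type operator B g(sigma) = int (g(sigma') - g(sigma)) b(sigma'.sigma) dsigma',
  understood as a principal value (limit of truncations away from sigma' = sigma).\<close>
definition Bop :: "(real \<Rightarrow> real) \<Rightarrow> ('a::euclidean_space \<Rightarrow> real) \<Rightarrow> 'a \<Rightarrow> real" where
  "Bop b g s = Lim (at_right 0)
     (\<lambda>\<epsilon>. sph_int_on {s'. s' \<bullet> s \<le> 1 - \<epsilon>} (\<lambda>s'. (g s' - g s) * b (s' \<bullet> s)))"

definition Gamma_Delta :: "('a::euclidean_space \<Rightarrow> real) \<Rightarrow> ('a \<Rightarrow> real) \<Rightarrow> 'a \<Rightarrow> real" where
  "Gamma_Delta g h s = sgrad g s \<bullet> sgrad h s"

definition Gamma2 :: "(real \<Rightarrow> real) \<Rightarrow> ('a::euclidean_space \<Rightarrow> real) \<Rightarrow> ('a \<Rightarrow> real) \<Rightarrow> 'a \<Rightarrow> real" where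
  "Gamma2 b g h s = (1/2) * (Bop b (Gamma_Delta g h) s
      - Gamma_Delta (Bop b g) h s - Gamma_Delta g (Bop b h) s)"

definition even_pos_smooth :: "('a::euclidean_space \<Rightarrow> real) \<Rightarrow> bool" where
  "even_pos_smooth f \<longleftrightarrow> smooth_sphere f \<and> (\<forall>s\<in>Sph. 0 < f s \<and> f s = f (- s))"

end

theory Submission
  imports Defs
begin

inductive_set alg :: "('a::euclidean_space \<Rightarrow> real) \<Rightarrow> ('a \<Rightarrow> real) set" for F where
  base: "set vs \<subseteq> Basis \<Longrightarrow> dirderiv vs F \<in> alg F"
| pw: "(\<lambda>x. F x powr r) \<in> alg F"
| cst: "(\<lambda>x. c) \<in> alg F"
| add: "G \<in> alg F \<Longrightarrow> H \<in> alg F \<Longrightarrow> (\<lambda>x. G x + H x) \<in> alg F"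
| mul: "G \<in> alg F \<Longrightarrow> H \<in> alg F \<Longrightarrow> (\<lambda>x. G x * H x) \<in> alg F"

lemma alg_props:
  assumes sm: "smooth_on U F" and U: "open U" and pos: "\<And>x. x \<in> U \<Longrightarrow> F x > 0"
    and G: "G \<in> alg F"
  shows "(\<forall>x\<in>U. G differentiable (at x)) \<and> continuous_on U G \<and>
    (\<forall>v\<in>Basis. \<exists>G'\<in>alg F. \<forall>x\<in>U. frechet_derivative G (at x) v = G' x)"
  using G
proof (induction rule: alg.induct)
  case (base vs)
  have "dirderiv vs F differentiable_on U \<and> continuous_on U (dirderiv vs F)"
    using sm base unfolding smooth_on_def by blast
  moreover have "\<exists>G'\<in>alg F. \<forall>x\<in>U. frechet_derivative (dirderiv vs F) (at x) v = G' x" if "v \<in> Basis" for v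
    by (rule bexI[of _ "dirderiv (v # vs) F"]) (use that base alg.base[of "v # vs" F] in auto)
  ultimately show ?case using U differentiable_on_eq_differentiable_at by blast
next
  case (pw r)
  have sm0: "F differentiable_on U \<and> continuous_on U F"
    using sm unfolding smooth_on_def by (metis dirderiv.simps(1) empty_set empty_subsetI)
  have F0: "F differentiable (at x)" "continuous_on U F" if "x \<in> U" for x
    using sm0 U that differentiable_on_eq_differentiable_at by blast+
  have D: "((\<lambda>x. F x powr r) has_derivative (\<lambda>h. frechet_derivative F (at x) h * (r * F x powr (r - 1)))) (at x)"
    if "x \<in> U" for x
    using DERIV_compose_FDERIV[OF has_real_derivative_powr[OF pos[OF that]] F0(1)[OF that, unfolded frechet_derivative_works]] .
  show ?case
  proof (intro conjI ballI)
    fix x assume "x \<in> U" thus "(\<lambda>x. F x powr r) differentiable at x" using D differentiable_def by blast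
  next
    show "continuous_on U (\<lambda>x. F x powr r)"
      using sm0 pos by (intro continuous_on_powr continuous_on_const) (auto, metis less_irrefl)
  next
    fix v :: 'a assume v: "v \<in> Basis"
    show "\<exists>G'\<in>alg F. \<forall>x\<in>U. frechet_derivative (\<lambda>x. F x powr r) (at x) v = G' x"
    proof (intro bexI ballI)
      fix x assume "x \<in> U"
      show "frechet_derivative (\<lambda>x. F x powr r) (at x) v = (\<lambda>x. (\<lambda>x. r) x * ((\<lambda>x. F x powr (r - 1)) x * dirderiv [v] F x)) x"
        using frechet_derivative_at[OF D[OF \<open>x \<in> U\<close>], symmetric] by simp
    next
      show "(\<lambda>x. (\<lambda>x. r) x * ((\<lambda>x. F x powr (r - 1)) x * dirderiv [v] F x)) \<in> alg F"
        using v by (intro alg.mul alg.cst alg.pw alg.base) auto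
    qed
  qed
next
  case (cst c)
  then show ?case by (auto intro!: bexI[of _ "\<lambda>x. 0"] alg.cst)
next
  case (add G H)
  show ?case
  proof (intro conjI ballI)
    show "continuous_on U (\<lambda>x. G x + H x)" using add by (intro continuous_intros) auto
  next
    fix x assume "x \<in> U" thus "(\<lambda>x. G x + H x) differentiable at x" using add by auto
  next
    fix v :: 'a assume v: "v \<in> Basis"
    obtain G' H' where G': "G' \<in> alg F" "\<forall>x\<in>U. frechet_derivative G (at x) v = G' x"
      and H': "H' \<in> alg F" "\<forall>x\<in>U. frechet_derivative H (at x) v = H' x" using add v by blast
    show "\<exists>K\<in>alg F. \<forall>x\<in>U. frechet_derivative (\<lambda>x. G x + H x) (at x) v = K x"
    proof (intro bexI ballI)
      fix x assume x: "x \<in> U"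
      have dd: "((\<lambda>x. G x + H x) has_derivative (\<lambda>h. frechet_derivative G (at x) h + frechet_derivative H (at x) h)) (at x)"
        using add x by (intro has_derivative_add) (auto simp: frechet_derivative_works[symmetric])
      show "frechet_derivative (\<lambda>x. G x + H x) (at x) v = G' x + H' x"
        unfolding frechet_derivative_at[OF dd, symmetric] using G' H' x by simp
    qed (rule alg.add[OF G'(1) H'(1)])
  qed
next
  case (mul G H)
  show ?case
  proof (intro conjI ballI)
    show "continuous_on U (\<lambda>x. G x * H x)" using mul by (intro continuous_intros) auto
  next
    fix x assume "x \<in> U" thus "(\<lambda>x. G x * H x) differentiable at x" using mul by auto
  next
    fix v :: 'a assume v: "v \<in> Basis"
    obtain G' H' where G': "G' \<in> alg F" "\<forall>x\<in>U. frechet_derivative G (at x) v = G' x"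
      and H': "H' \<in> alg F" "\<forall>x\<in>U. frechet_derivative H (at x) v = H' x" using mul v by blast
    show "\<exists>K\<in>alg F. \<forall>x\<in>U. frechet_derivative (\<lambda>x. G x * H x) (at x) v = K x"
    proof (intro bexI ballI)
      fix x assume x: "x \<in> U"
      have dd: "((\<lambda>x. G x * H x) has_derivative (\<lambda>h. G x * frechet_derivative H (at x) h + frechet_derivative G (at x) h * H x)) (at x)"
        using mul x by (intro has_derivative_mult) (auto simp: frechet_derivative_works[symmetric])
      show "frechet_derivative (\<lambda>x. G x * H x) (at x) v = G x * H' x + G' x * H x"
        unfolding frechet_derivative_at[OF dd, symmetric] using G' H' x by simp
    next
      show "(\<lambda>x. G x * H' x + G' x * H x) \<in> alg F" by (intro alg.add alg.mul G'(1) H'(1) mul.hyps)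
    qed
  qed
qed

lemma fd_cong_open:
  assumes "open U" "x \<in> U" "\<And>y. y \<in> U \<Longrightarrow> A y = B y"
  shows "frechet_derivative A (at x) = frechet_derivative B (at x)"
proof -
  have "(\<lambda>D. (A has_derivative D) (at x)) = (\<lambda>D. (B has_derivative D) (at x))"
    using assms by (intro ext iffI) (auto intro: has_derivative_transform_within_open)
  thus ?thesis unfolding frechet_derivative_def by simp
qed

lemma smooth_powr:
  assumes sm: "smooth_on U F" and U: "open U" and pos: "\<And>x. x \<in> U \<Longrightarrow> F x > 0"
    and K: "\<And>x. x \<in> U \<Longrightarrow> K x = F x powr r"
  shows "smooth_on U K"
proof -
  have rep: "\<exists>G\<in>alg F. \<forall>x\<in>U. dirderiv vs K x = G x" if "set vs \<subseteq> Basis" for vs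
    using that
  proof (induction vs)
    case Nil then show ?case using K by (auto intro!: bexI[of _ "\<lambda>x. F x powr r"] alg.pw)
  next
    case (Cons v vs)
    then obtain G where G: "G \<in> alg F" "\<forall>x\<in>U. dirderiv vs K x = G x" by auto
    obtain G' where G': "G' \<in> alg F" "\<forall>x\<in>U. frechet_derivative G (at x) v = G' x"
      using alg_props[OF sm U pos G(1)] Cons.prems by auto
    show ?case
    proof (intro bexI[OF _ G'(1)] ballI)
      fix x assume x: "x \<in> U"
      have "dirderiv (v # vs) K x = frechet_derivative (dirderiv vs K) (at x) v" by simp
      also have "\<dots> = frechet_derivative G (at x) v" using fd_cong_open[OF U x] G(2) by metis
      finally show "dirderiv (v # vs) K x = G' x" using G'(2) x by simp
    qed
  qed
  show ?thesis unfolding smooth_on_def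
  proof (intro allI impI conjI)
    fix vs :: "'a list" assume vs: "set vs \<subseteq> Basis"
    obtain G where G: "G \<in> alg F" "\<forall>x\<in>U. dirderiv vs K x = G x" using rep[OF vs] by auto
    have P: "(\<forall>x\<in>U. G differentiable (at x)) \<and> continuous_on U G" using alg_props[OF sm U pos G(1)] by auto
    show "continuous_on U (dirderiv vs K)" using P G(2) continuous_on_cong by fastforce
    show "dirderiv vs K differentiable_on U"
      unfolding differentiable_on_eq_differentiable_at[OF U]
    proof
      fix x assume x: "x \<in> U"
      then obtain D where "(G has_derivative D) (at x)" using P differentiable_def by blast
      hence "(dirderiv vs K has_derivative D) (at x)"
        by (rule has_derivative_transform_within_open[OF _ U x]) (use G(2) in simp)
      thus "dirderiv vs K differentiable at x" using differentiable_def by blast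
    qed
  qed
qed

lemma point_cong:
  fixes f g :: "'a::euclidean_space \<Rightarrow> real"
  assumes "\<And>x. x \<noteq> c \<Longrightarrow> f x = g x"
  shows "integral\<^sup>L lborel f = integral\<^sup>L lborel g"
proof (cases "f \<in> borel_measurable borel")
  case True
  have "g = (\<lambda>x. if x \<in> {c} then g c else f x)" using assms by auto
  also have "\<dots> \<in> borel_measurable borel" using True by (intro measurable_If_set) auto
  finally have "g \<in> borel_measurable borel" .
  then show ?thesis using True assms
    by (intro integral_cong_AE) (auto intro: AE_mp[OF AE_lborel_singleton[of c]])
next
  case False
  have "f = (\<lambda>x. if x \<in> {c} then f c else g x)" using assms by auto
  moreover have "g \<in> borel_measurable borel \<Longrightarrow> (\<lambda>x. if x \<in> {c} then f c else g x) \<in> borel_measurable borel"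
    by (intro measurable_If_set) auto
  ultimately have "g \<notin> borel_measurable borel" using False by auto
  then show ?thesis using False
    by (metis borel_measurable_integrable measurable_lborel2 not_integrable_integral_eq)
qed

lemma nx_sph: "(x::'a::euclidean_space) \<noteq> 0 \<Longrightarrow> x /\<^sub>R norm x \<in> Sph"
  by simp

lemma sph_int_cong:
  assumes "\<And>s. s \<in> (Sph::'a::euclidean_space set) \<Longrightarrow> g s = h s"
  shows "sph_int g = sph_int h"
  unfolding sph_int_def set_lebesgue_integral_def
  using point_cong[of 0] assms nx_sph by (metis (no_types, lifting))

lemma sph_int_cmult: "sph_int (\<lambda>s. c * g s) = c * sph_int (g::'a::euclidean_space \<Rightarrow> real)"
  unfolding sph_int_def set_lebesgue_integral_def
  by (simp add: mult.left_commute)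

lemma cmp_int:
  fixes h p :: "'b \<Rightarrow> real"
  assumes hm: "h \<in> borel_measurable M" and pm: "p \<in> borel_measurable M"
    and ae: "AE x in M. 0 \<le> p x \<and> p x \<le> h x \<and> h x \<le> 2 * p x"
  shows "0 \<le> integral\<^sup>L M p \<and> integral\<^sup>L M p \<le> integral\<^sup>L M h \<and> integral\<^sup>L M h \<le> 2 * integral\<^sup>L M p"
proof (cases "integrable M h")
  case True
  have pi: "integrable M p"
    by (rule Bochner_Integration.integrable_bound[OF True pm]) (use ae in \<open>auto elim: AE_mp\<close>)
  have "integral\<^sup>L M h \<le> integral\<^sup>L M (\<lambda>x. 2 * p x)"
    using True pi ae by (intro integral_mono_AE) (auto elim: AE_mp)
  moreover have "integral\<^sup>L M p \<le> integral\<^sup>L M h"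
    using True pi ae by (intro integral_mono_AE) (auto elim: AE_mp)
  moreover have "0 \<le> integral\<^sup>L M p" using ae by (intro integral_nonneg_AE) (auto elim: AE_mp)
  ultimately show ?thesis by simp
next
  case False
  have "\<not> integrable M p"
  proof
    assume pi: "integrable M p"
    have "integrable M h"
      by (rule Bochner_Integration.integrable_bound[of M "\<lambda>x. 2 * p x"]) (use pi hm ae in \<open>auto elim: AE_mp\<close>)
    thus False using False by simp
  qed
  thus ?thesis using False by (simp add: not_integrable_integral_eq)
qed

lemma sph_cmp:
  fixes h p :: "'a::euclidean_space \<Rightarrow> real"
  assumes hm: "(\<lambda>x. h (x /\<^sub>R norm x)) \<in> borel_measurable borel"
    and pm: "(\<lambda>x. p (x /\<^sub>R norm x)) \<in> borel_measurable borel"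
    and pt: "\<And>s. s \<in> Sph \<Longrightarrow> 0 \<le> p s \<and> p s \<le> h s \<and> h s \<le> 2 * p s"
  shows "0 \<le> sph_int p \<and> sph_int p \<le> sph_int h \<and> sph_int h \<le> 2 * sph_int p"
proof -
  have "0 \<le> integral\<^sup>L lborel (\<lambda>x. indicator (ball 0 1) x *\<^sub>R p (x /\<^sub>R norm x))
    \<and> integral\<^sup>L lborel (\<lambda>x. indicator (ball 0 1) x *\<^sub>R p (x /\<^sub>R norm x)) \<le> integral\<^sup>L lborel (\<lambda>x. indicator (ball 0 1) x *\<^sub>R h (x /\<^sub>R norm x))
    \<and> integral\<^sup>L lborel (\<lambda>x. indicator (ball 0 1) x *\<^sub>R h (x /\<^sub>R norm x)) \<le> 2 * integral\<^sup>L lborel (\<lambda>x. indicator (ball 0 1) x *\<^sub>R p (x /\<^sub>R norm x))"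
  proof (rule cmp_int)
    show "(\<lambda>x. indicator (ball 0 1) x *\<^sub>R h (x /\<^sub>R norm x)) \<in> borel_measurable lborel" using hm by (simp, intro borel_measurable_times borel_measurable_indicator) auto
    show "(\<lambda>x. indicator (ball 0 1) x *\<^sub>R p (x /\<^sub>R norm x)) \<in> borel_measurable lborel" using pm by (simp, intro borel_measurable_times borel_measurable_indicator) auto
    show "AE x in lborel. 0 \<le> indicator (ball 0 1) x *\<^sub>R p (x /\<^sub>R norm x) \<and>
         indicator (ball 0 1) x *\<^sub>R p (x /\<^sub>R norm x) \<le> indicator (ball 0 1) x *\<^sub>R h (x /\<^sub>R norm x) \<and>
         indicator (ball 0 1) x *\<^sub>R h (x /\<^sub>R norm x) \<le> 2 * (indicator (ball 0 1) x *\<^sub>R p (x /\<^sub>R norm x))"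
      using AE_lborel_singleton[of 0]
    proof (rule AE_mp, intro AE_I2 impI)
      fix x :: 'a assume "x \<noteq> 0"
      then have "0 \<le> p (x /\<^sub>R norm x) \<and> p (x /\<^sub>R norm x) \<le> h (x /\<^sub>R norm x) \<and> h (x /\<^sub>R norm x) \<le> 2 * p (x /\<^sub>R norm x)"
        using pt nx_sph by blast
      then show "0 \<le> indicator (ball 0 1) x *\<^sub>R p (x /\<^sub>R norm x) \<and>
         indicator (ball 0 1) x *\<^sub>R p (x /\<^sub>R norm x) \<le> indicator (ball 0 1) x *\<^sub>R h (x /\<^sub>R norm x) \<and>
         indicator (ball 0 1) x *\<^sub>R h (x /\<^sub>R norm x) \<le> 2 * (indicator (ball 0 1) x *\<^sub>R p (x /\<^sub>R norm x))"
        by (auto simp: indicator_def)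
    qed
  qed
  then show ?thesis unfolding sph_int_def set_lebesgue_integral_def
    by (auto intro: mult_left_mono)
qed

lemma alg_ineq:
  fixes a c beta :: real
  assumes "a > 0" "c > 0" "beta \<ge> 0"
  shows "0 \<le> (sqrt a - sqrt c)\<^sup>2 * beta \<and> (sqrt a - sqrt c)\<^sup>2 * beta \<le> (a - c)\<^sup>2 / (a + c) * beta
    \<and> (a - c)\<^sup>2 / (a + c) * beta \<le> 2 * ((sqrt a - sqrt c)\<^sup>2 * beta)"
proof -
  define u where "u = sqrt a"
  define v where "v = sqrt c"
  have u: "u > 0" "a = u\<^sup>2" using assms unfolding u_def by auto
  have v: "v > 0" "c = v\<^sup>2" using assms unfolding v_def by auto
  have ac: "a + c > 0" using assms by simp
  have sq: "(a - c)\<^sup>2 = (u - v)\<^sup>2 * (u + v)\<^sup>2" unfolding u v by (simp add: power2_eq_square algebra_simps)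
  have w: "0 \<le> (u - v)\<^sup>2" by simp
  have i1: "u\<^sup>2 + v\<^sup>2 \<le> (u + v)\<^sup>2" using u v by (simp add: power2_eq_square algebra_simps)
  have i2: "(u + v)\<^sup>2 \<le> 2 * (u\<^sup>2 + v\<^sup>2)" using sum_squares_ge_zero[of "u - v" 0]
    by (simp add: power2_eq_square algebra_simps)
  have l1: "(u - v)\<^sup>2 \<le> (a - c)\<^sup>2 / (a + c)"
    unfolding pos_le_divide_eq[OF ac] sq using mult_left_mono[OF i1 w] u v by simp
  have l2: "(a - c)\<^sup>2 / (a + c) \<le> 2 * (u - v)\<^sup>2"
    unfolding pos_divide_le_eq[OF ac] sq using mult_left_mono[OF i2 w] u v by (simp add: algebra_simps)
  show ?thesis unfolding u_def[symmetric] v_def[symmetric]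
    using mult_right_mono[OF l1 assms(3)] mult_right_mono[OF l2 assms(3)] assms(3)
    by (simp add: mult.assoc)
qed

lemma smooth_cont:
  assumes "smooth_on U F" shows "F differentiable_on U" "continuous_on U F"
  using assms unfolding smooth_on_def by (metis dirderiv.simps(1) empty_set empty_subsetI)+

lemma sgrad_sqrt:
  fixes f :: "'a::euclidean_space \<Rightarrow> real"
  assumes smf: "smooth_on (- {0}) (hext f)" and s: "s \<in> Sph" and fs: "f s > 0"
  shows "sgrad (\<lambda>x. sqrt (f x)) s = (inverse (sqrt (f s)) / 2) *\<^sub>R sgrad f s"
proof -
  have hs: "hext (\<lambda>x. sqrt (f x)) = (\<lambda>x. sqrt (hext f x))" by (simp add: hext_def fun_eq_iff)
  have s0: "s \<noteq> 0" using s by auto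
  have hfs: "hext f s = f s" using s by (simp add: hext_def)
  have diff: "hext f differentiable at s"
    using smooth_cont(1)[OF smf] s0 differentiable_on_eq_differentiable_at[of "- {0}"] by auto
  have D: "((\<lambda>x. sqrt (hext f x)) has_derivative
      (\<lambda>h. frechet_derivative (hext f) (at s) h * (inverse (sqrt (hext f s)) / 2))) (at s)"
    by (rule DERIV_compose_FDERIV[OF DERIV_real_sqrt]) (use fs hfs diff frechet_derivative_works in auto)
  show ?thesis
    unfolding sgrad_def grad_def hs frechet_derivative_at[OF D, symmetric] hfs
    by (simp add: scaleR_sum_right mult_ac)
qed

lemma hext_meas:
  fixes f :: "'a::euclidean_space \<Rightarrow> real"
  assumes "continuous_on (- {0}) (hext f)"
  shows "(\<lambda>x. f (x /\<^sub>R norm x)) \<in> borel_measurable borel"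
  using borel_measurable_continuous_countable_exceptions[of "{0}" "hext f"] assms
  unfolding hext_def by auto

theorem lemma5p3:
  fixes b :: "real \<Rightarrow> real" and cK CP :: real
  assumes kernel: "angular_kernel b TYPE('a::euclidean_space)"
    and cK: "cK > 0" and CP: "CP > 0"
    and curv: "\<And>f :: 'a \<Rightarrow> real. even_pos_smooth f \<Longrightarrow>
        sph_int (\<lambda>s. Gamma2 b (\<lambda>x. ln (f x)) (\<lambda>x. ln (f x)) s * f s)
          \<ge> cK * sph_int (\<lambda>s. (norm (sgrad f s))\<^sup>2 / f s)"
    and poinc: "\<And>f :: 'a \<Rightarrow> real. even_pos_smooth f \<Longrightarrow>
        CP * sph_int (\<lambda>s. (norm (sgrad f s))\<^sup>2)
          \<ge> sph_int (\<lambda>s. sph_int (\<lambda>s'. (f s' - f s)\<^sup>2 * b (s' \<bullet> s)))"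
  shows "\<And>f :: 'a \<Rightarrow> real. even_pos_smooth f \<Longrightarrow>
        sph_int (\<lambda>s. Gamma2 b (\<lambda>x. ln (f x)) (\<lambda>x. ln (f x)) s * f s)
          \<ge> (2 * cK / CP) *
            sph_int (\<lambda>s. sph_int (\<lambda>s'. (f s' - f s)\<^sup>2 / (f s' + f s) * b (s' \<bullet> s)))"
proof -
  fix f :: "'a \<Rightarrow> real"
  assume ef: "even_pos_smooth f"
  have fpos: "\<And>s. s \<in> Sph \<Longrightarrow> 0 < f s" and fev: "\<And>s. s \<in> Sph \<Longrightarrow> f s = f (- s)"
    using ef unfolding even_pos_smooth_def by blast+
  have smf: "smooth_on (- {0}) (hext f)" using ef unfolding even_pos_smooth_def smooth_sphere_def by blast
  have mf[measurable]: "(\<lambda>x. f (x /\<^sub>R norm x)) \<in> borel_measurable borel"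
    by (rule hext_meas[OF smooth_cont(2)[OF smf]])
  have bm[measurable]: "b \<in> borel_measurable borel" using kernel unfolding angular_kernel_def by blast
  have bnn0: "\<forall>t\<in>{-1..1}. 0 \<le> b t" using kernel unfolding angular_kernel_def by blast
  have bnn: "0 \<le> b (s' \<bullet> s)" if "s \<in> Sph" "s' \<in> Sph" for s s' :: 'a
  proof -
    have "\<bar>s' \<bullet> s\<bar> \<le> 1" using Cauchy_Schwarz_ineq2[of s' s] that by simp
    hence "s' \<bullet> s \<in> {-1..1}" by (simp add: abs_le_iff)
    thus ?thesis using bnn0 by blast
  qed
  define g where "g = (\<lambda>x. sqrt (f x))"
  have hpos: "0 < hext f x" if "x \<in> - {0}" for x using that fpos by (simp add: hext_def)
  have eg: "even_pos_smooth g"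
    unfolding even_pos_smooth_def smooth_sphere_def
  proof (intro conjI ballI)
    show "smooth_on (- {0}) (hext g)"
    proof (rule smooth_powr[OF smf _ hpos])
      show "open (- {0::'a})" by auto
      fix x :: 'a assume "x \<in> - {0}"
      then show "hext g x = hext f x powr (1/2)"
        using hpos[of x] by (simp add: g_def hext_def powr_half_sqrt)
    qed
  next
    fix s :: 'a assume "s \<in> Sph"
    then show "0 < g s" "g s = g (- s)" using fpos[of s] fev[of s] unfolding g_def by simp_all
  qed
  have gr: "(norm (sgrad g s))\<^sup>2 = (1/4) * ((norm (sgrad f s))\<^sup>2 / f s)" if "s \<in> Sph" for s
  proof -
    have e: "sgrad g s = (inverse (sqrt (f s)) / 2) *\<^sub>R sgrad f s"
      unfolding g_def by (rule sgrad_sqrt[OF smf that fpos[OF that]])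
    have c: "(inverse (sqrt (f s)) / 2)\<^sup>2 = 1 / (4 * f s)"
      using fpos[OF that] by (simp add: power_divide power_inverse inverse_eq_divide)
    have a: "\<bar>inverse (sqrt (f s)) / 2\<bar> = inverse (sqrt (f s)) / 2" using fpos[OF that] by simp
    show ?thesis unfolding e norm_scaleR power_mult_distrib a c by simp
  qed
  have G1: "sph_int (\<lambda>s. (norm (sgrad g s))\<^sup>2) = (1/4) * sph_int (\<lambda>s. (norm (sgrad f s))\<^sup>2 / f s)"
  proof -
    have "sph_int (\<lambda>s. (norm (sgrad g s))\<^sup>2) = sph_int (\<lambda>s. (1/4) * ((norm (sgrad f s))\<^sup>2 / f s))"
      by (rule sph_int_cong) (rule gr)
    also have "\<dots> = (1/4) * sph_int (\<lambda>s. (norm (sgrad f s))\<^sup>2 / f s)" by (rule sph_int_cmult)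
    finally show ?thesis .
  qed
  define L where "L = sph_int (\<lambda>s. Gamma2 b (\<lambda>x. ln (f x)) (\<lambda>x. ln (f x)) s * f s)"
  define G where "G = sph_int (\<lambda>s. (norm (sgrad f s))\<^sup>2 / f s)"
  define H where "H = (\<lambda>s s'. (f s' - f s)\<^sup>2 / (f s' + f s) * b (s' \<bullet> s))"
  define P where "P = (\<lambda>s s'. (g s' - g s)\<^sup>2 * b (s' \<bullet> s))"
  have c1: "L \<ge> cK * G" using curv[OF ef] unfolding L_def G_def .
  have c2: "CP * ((1/4) * G) \<ge> sph_int (\<lambda>s. sph_int (P s))"
    using poinc[OF eg] unfolding G1 G_def P_def .
  have inner: "0 \<le> sph_int (P s) \<and> sph_int (P s) \<le> sph_int (H s) \<and> sph_int (H s) \<le> 2 * sph_int (P s)"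
    if s: "s \<in> Sph" for s
  proof (rule sph_cmp)
    show "(\<lambda>x. H s (x /\<^sub>R norm x)) \<in> borel_measurable borel" unfolding H_def by measurable
    show "(\<lambda>x. P s (x /\<^sub>R norm x)) \<in> borel_measurable borel" unfolding P_def g_def by measurable
    fix s' :: 'a assume s': "s' \<in> Sph"
    show "0 \<le> P s s' \<and> P s s' \<le> H s s' \<and> H s s' \<le> 2 * P s s'"
      using alg_ineq[OF fpos[OF s'] fpos[OF s] bnn[OF s s']] unfolding P_def H_def g_def .
  qed
  have [measurable]: "ball (0::'a) 1 \<in> sets borel" by simp
  have eqm: "sets (borel \<Otimes>\<^sub>M lborel) = sets (borel \<Otimes>\<^sub>M (borel::'a measure))"
    by (rule sets_pair_measure_cong) simp_all
  have outer: "0 \<le> sph_int (\<lambda>s. sph_int (P s)) \<and> sph_int (\<lambda>s. sph_int (P s)) \<le> sph_int (\<lambda>s. sph_int (H s))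
      \<and> sph_int (\<lambda>s. sph_int (H s)) \<le> 2 * sph_int (\<lambda>s. sph_int (P s))"
  proof (rule sph_cmp)
    show "(\<lambda>x. sph_int (H (x /\<^sub>R norm x))) \<in> borel_measurable borel"
    proof -
      have "(\<lambda>(x,y). indicator (ball 0 1) y *\<^sub>R H (x /\<^sub>R norm x) (y /\<^sub>R norm y)) \<in> borel_measurable (borel \<Otimes>\<^sub>M (borel::'a measure))"
        unfolding H_def by measurable
      hence "(\<lambda>(x,y). indicator (ball 0 1) y *\<^sub>R H (x /\<^sub>R norm x) (y /\<^sub>R norm y)) \<in> borel_measurable (borel \<Otimes>\<^sub>M lborel)"
        using measurable_cong_sets[OF eqm refl] by simp
      hence "(\<lambda>x. LINT y|lborel. indicator (ball 0 1) y *\<^sub>R H (x /\<^sub>R norm x) (y /\<^sub>R norm y)) \<in> borel_measurable borel"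
        by (rule lborel.borel_measurable_lebesgue_integral)
      thus ?thesis unfolding sph_int_def set_lebesgue_integral_def by measurable
    qed
    show "(\<lambda>x. sph_int (P (x /\<^sub>R norm x))) \<in> borel_measurable borel"
    proof -
      have "(\<lambda>(x,y). indicator (ball 0 1) y *\<^sub>R P (x /\<^sub>R norm x) (y /\<^sub>R norm y)) \<in> borel_measurable (borel \<Otimes>\<^sub>M (borel::'a measure))"
        unfolding P_def g_def by measurable
      hence "(\<lambda>(x,y). indicator (ball 0 1) y *\<^sub>R P (x /\<^sub>R norm x) (y /\<^sub>R norm y)) \<in> borel_measurable (borel \<Otimes>\<^sub>M lborel)"
        using measurable_cong_sets[OF eqm refl] by simp
      hence "(\<lambda>x. LINT y|lborel. indicator (ball 0 1) y *\<^sub>R P (x /\<^sub>R norm x) (y /\<^sub>R norm y)) \<in> borel_measurable borel"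
        by (rule lborel.borel_measurable_lebesgue_integral)
      thus ?thesis unfolding sph_int_def set_lebesgue_integral_def by measurable
    qed
  qed (rule inner)
  define A where "A = sph_int (\<lambda>s. sph_int (H s))"
  have A: "A \<le> CP * G / 2" using outer c2 unfolding A_def by linarith
  have "(2 * cK / CP) * A \<le> (2 * cK / CP) * (CP * G / 2)"
    using A cK CP by (intro mult_left_mono) auto
  also have "\<dots> = cK * G" using CP by (simp add: field_simps)
  finally show "sph_int (\<lambda>s. Gamma2 b (\<lambda>x. ln (f x)) (\<lambda>x. ln (f x)) s * f s)
          \<ge> (2 * cK / CP) *
            sph_int (\<lambda>s. sph_int (\<lambda>s'. (f s' - f s)\<^sup>2 / (f s' + f s) * b (s' \<bullet> s)))"
    using c1 unfolding L_def A_def H_def by linarith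
qed

end
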